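(* Let $M=\neg A_1\lor\dots\lor\neg A_n\lor D$ be a flat clause ($D$ positive), and for $i=1,\dots,n$ let $C_i=B_i\lor D_i$ be loosely guarded clauses with $B_i$ a positive literal, such that $M,C_1,\dots,C_n$ are pairwise variable-disjoint and, for each $i$, either $C_i$ is ground or $B_i$ contains a compound term. Let $\sigma'$ be a simultaneous most general unifier with $B_i\sigma'=A_i\sigma'$ for all $1\le i\le n$, and call a variable $x$ of $\neg A_1\lor\dots\lor\neg A_n$ a top variable if $\mathrm{Dep}(x\sigma')\ge\mathrm{Dep}(y\sigma')$ for every variable $y$ of $\neg A_1\lor\dots\lor\neg A_n$. Then: (1) For every $i$ such that $A_i$ contains a top variable, every top variable occurring in $A_i$ at argument position $k$ is matched by a constant or a compound term at position $k$ of $B_i$, and every non-top variable occurring in $A_i$ at position $k$ is matched by a constant or a variable at position $k$ of $B_i$. (2) If some top variable occurring in some $A_i$ is matched by a constant in $B_i$, then every variable of $\neg A_1\lor\dots\lor\neg A_n$ is a top variable and $\sigma'$ maps each such variable to a constant.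
   Context: A compound term is a term that is neither a variable nor a constant; $\mathrm{Var}(E)$ is the set of variables of $E$. Term depth: $\mathrm{Dep}(t)=0$ if $t$ is a variable or constant, and $\mathrm{Dep}(f(u_1,\dots,u_n))=1+\max_i\mathrm{Dep}(u_i)$. A literal is flat if every argument is a variable or constant; simple if every argument is a variable, a constant, or $f(u_1,\dots,u_n)$ with each $u_i$ a variable or constant; a clause is flat/simple if all its literals are. A clause $C$ is covering if every compound term $t$ in $C$ satisfies $\mathrm{Var}(t)=\mathrm{Var}(C)$. A loosely guarded clause is an equality-free, simple, covering clause $C$ that is either ground or contains a set $\mathcal G$ of negative flat literals with $\mathrm{Var}(\mathcal G)=\mathrm{Var}(C)$ such that every pair of variables of $C$ co-occurs in some literal of $\mathcal G$ (guarded clauses are special cases). For literals $A(s_1,\dots,s_k)$ and $B(r_1,\dots,r_k)$ being unified, the term $s_j$ is said to be matched by $r_j$. *)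

theory Defs
  imports Main
begin

text \<open>Terms over function symbols 'f (constants are 0-ary function symbols) and variables 'v.\<close>
datatype ('f, 'v) trm = Var 'v | Fun 'f "('f, 'v) trm list"

datatype ('p, 'f, 'v) atm = Pred 'p "('f, 'v) trm list" | Eq "('f, 'v) trm" "('f, 'v) trm"

datatype ('p, 'f, 'v) lit = Lit (positive: bool) (atom: "('p, 'f, 'v) atm")

type_synonym ('p, 'f, 'v) clause = "('p, 'f, 'v) lit list"

fun tvars :: "('f, 'v) trm \<Rightarrow> 'v set" where
  "tvars (Var x) = {x}"
| "tvars (Fun f ts) = (\<Union>t \<in> set ts. tvars t)"

fun args :: "('p, 'f, 'v) atm \<Rightarrow> ('f, 'v) trm list" where
  "args (Pred p ts) = ts"
| "args (Eq s t) = [s, t]"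

definition avars :: "('p, 'f, 'v) atm \<Rightarrow> 'v set" where
  "avars A = (\<Union>t \<in> set (args A). tvars t)"

definition lvars :: "('p, 'f, 'v) lit \<Rightarrow> 'v set" where
  "lvars L = avars (atom L)"

definition cvars :: "('p, 'f, 'v) clause \<Rightarrow> 'v set" where
  "cvars C = (\<Union>L \<in> set C. lvars L)"

definition is_var :: "('f, 'v) trm \<Rightarrow> bool" where
  "is_var t \<longleftrightarrow> (\<exists>x. t = Var x)"

definition is_const :: "('f, 'v) trm \<Rightarrow> bool" where
  "is_const t \<longleftrightarrow> (\<exists>c. t = Fun c [])"

definition is_compound :: "('f, 'v) trm \<Rightarrow> bool" where
  "is_compound t \<longleftrightarrow> \<not> is_var t \<and> \<not> is_const t"

fun subterms :: "('f, 'v) trm \<Rightarrow> ('f, 'v) trm set" where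
  "subterms (Var x) = {Var x}"
| "subterms (Fun f ts) = insert (Fun f ts) (\<Union>t \<in> set ts. subterms t)"

definition atm_terms :: "('p, 'f, 'v) atm \<Rightarrow> ('f, 'v) trm set" where
  "atm_terms A = (\<Union>t \<in> set (args A). subterms t)"

definition cl_terms :: "('p, 'f, 'v) clause \<Rightarrow> ('f, 'v) trm set" where
  "cl_terms C = (\<Union>L \<in> set C. atm_terms (atom L))"

fun dep :: "('f, 'v) trm \<Rightarrow> nat" where
  "dep (Var x) = 0"
| "dep (Fun f ts) = (if ts = [] then 0 else 1 + Max (set (map dep ts)))"

definition flat_lit :: "('p, 'f, 'v) lit \<Rightarrow> bool" where
  "flat_lit L \<longleftrightarrow> (\<forall>t \<in> set (args (atom L)). is_var t \<or> is_const t)"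

definition simple_lit :: "('p, 'f, 'v) lit \<Rightarrow> bool" where
  "simple_lit L \<longleftrightarrow> (\<forall>t \<in> set (args (atom L)).
      is_var t \<or> is_const t \<or> (\<exists>f us. t = Fun f us \<and> (\<forall>u \<in> set us. is_var u \<or> is_const u)))"

definition flat_clause :: "('p, 'f, 'v) clause \<Rightarrow> bool" where
  "flat_clause C \<longleftrightarrow> (\<forall>L \<in> set C. flat_lit L)"

definition simple_clause :: "('p, 'f, 'v) clause \<Rightarrow> bool" where
  "simple_clause C \<longleftrightarrow> (\<forall>L \<in> set C. simple_lit L)"

definition covering :: "('p, 'f, 'v) clause \<Rightarrow> bool" where
  "covering C \<longleftrightarrow> (\<forall>t \<in> cl_terms C. is_compound t \<longrightarrow> tvars t = cvars C)"

definition is_eq_atm :: "('p, 'f, 'v) atm \<Rightarrow> bool" where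
  "is_eq_atm A \<longleftrightarrow> (\<exists>s t. A = Eq s t)"

definition equality_free :: "('p, 'f, 'v) clause \<Rightarrow> bool" where
  "equality_free C \<longleftrightarrow> (\<forall>L \<in> set C. \<not> is_eq_atm (atom L))"

definition ground_clause :: "('p, 'f, 'v) clause \<Rightarrow> bool" where
  "ground_clause C \<longleftrightarrow> cvars C = {}"

definition loosely_guarded :: "('p, 'f, 'v) clause \<Rightarrow> bool" where
  "loosely_guarded C \<longleftrightarrow> equality_free C \<and> simple_clause C \<and> covering C \<and>
     (ground_clause C \<or>
      (\<exists>G. G \<subseteq> set C \<and> (\<forall>L \<in> G. \<not> positive L \<and> flat_lit L) \<and>
           (\<Union>L \<in> G. lvars L) = cvars C \<and>
           (\<forall>x \<in> cvars C. \<forall>y \<in> cvars C. \<exists>L \<in> G. x \<in> lvars L \<and> y \<in> lvars L)))"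

type_synonym ('f, 'v) subst = "'v \<Rightarrow> ('f, 'v) trm"

fun tsubst :: "('f, 'v) trm \<Rightarrow> ('f, 'v) subst \<Rightarrow> ('f, 'v) trm" where
  "tsubst (Var x) \<sigma> = \<sigma> x"
| "tsubst (Fun f ts) \<sigma> = Fun f (map (\<lambda>t. tsubst t \<sigma>) ts)"

fun asubst :: "('p, 'f, 'v) atm \<Rightarrow> ('f, 'v) subst \<Rightarrow> ('p, 'f, 'v) atm" where
  "asubst (Pred p ts) \<sigma> = Pred p (map (\<lambda>t. tsubst t \<sigma>) ts)"
| "asubst (Eq s t) \<sigma> = Eq (tsubst s \<sigma>) (tsubst t \<sigma>)"

definition simul_unifier :: "('f, 'v) subst \<Rightarrow> ('p, 'f, 'v) atm list \<Rightarrow> ('p, 'f, 'v) atm list \<Rightarrow> bool" where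
  "simul_unifier \<sigma> Bs As \<longleftrightarrow> length Bs = length As \<and>
     (\<forall>i < length As. asubst (Bs ! i) \<sigma> = asubst (As ! i) \<sigma>)"

definition simul_mgu :: "('f, 'v) subst \<Rightarrow> ('p, 'f, 'v) atm list \<Rightarrow> ('p, 'f, 'v) atm list \<Rightarrow> bool" where
  "simul_mgu \<sigma> Bs As \<longleftrightarrow> simul_unifier \<sigma> Bs As \<and>
     (\<forall>\<tau>. simul_unifier \<tau> Bs As \<longrightarrow> (\<exists>\<rho>. \<forall>x. \<tau> x = tsubst (\<sigma> x) \<rho>))"

definition top_var :: "('f, 'v) subst \<Rightarrow> ('p, 'f, 'v) atm list \<Rightarrow> 'v \<Rightarrow> bool" where
  "top_var \<sigma> As x \<longleftrightarrow> x \<in> (\<Union>A \<in> set As. avars A) \<and>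
     (\<forall>y \<in> (\<Union>A \<in> set As. avars A). dep (\<sigma> y) \<le> dep (\<sigma> x))"

end

theory Submission
  imports Defs
begin

lemma args_asubst: "args (asubst A \<sigma>) = map (\<lambda>t. tsubst t \<sigma>) (args A)"
  by (cases A) auto

lemma self_subterm: "t \<in> subterms t"
  by (cases t) auto

lemma compound_iff: "is_compound t \<longleftrightarrow> (\<exists>f us. t = Fun f us \<and> us \<noteq> [])"
  unfolding is_compound_def is_var_def is_const_def
  by (cases t) auto

lemma compound_sub:
  assumes "is_var t \<or> is_const t \<or> (\<exists>f us. t = Fun f us \<and> (\<forall>u\<in>set us. is_var u \<or> is_const u))"
    and "s \<in> subterms t" and "is_compound s"
  shows "s = t"
  using assms unfolding is_compound_def is_var_def is_const_def
  by (cases t) auto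

lemma dep_lt:
  assumes "u \<in> set us"
  shows "dep (tsubst u \<sigma>) < dep (tsubst (Fun f us) \<sigma>)"
proof -
  have ne: "us \<noteq> []" using assms by auto
  have "dep (tsubst u \<sigma>) \<le> Max (set (map dep (map (\<lambda>t. tsubst t \<sigma>) us)))"
    by (rule Max_ge) (use assms in auto)
  then show ?thesis using ne by simp
qed

lemma dep_var_lt:
  assumes "z \<in> tvars (Fun f us)" "\<forall>u\<in>set us. is_var u \<or> is_const u"
  shows "dep (\<sigma> z) < dep (tsubst (Fun f us) \<sigma>)"
proof -
  have "Var z \<in> set us" using assms unfolding is_var_def is_const_def by auto
  from dep_lt[OF this, of \<sigma> f] show ?thesis by simp
qed

lemma dep_compound_le:
  assumes "us \<noteq> []" "\<forall>u\<in>set us. is_var u \<or> is_const u"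
    "us' \<noteq> []" "\<forall>u\<in>set us'. is_var u \<or> is_const u"
    "tvars (Fun f us) \<subseteq> tvars (Fun g us')"
  shows "dep (tsubst (Fun f us) \<sigma>) \<le> dep (tsubst (Fun g us') \<sigma>)"
proof -
  define d where "d = dep (tsubst (Fun g us') \<sigma>)"
  have pos: "0 < d" using assms(3) unfolding d_def by simp
  have lt: "\<forall>u\<in>set us. dep (tsubst u \<sigma>) < d"
  proof
    fix u assume u: "u \<in> set us"
    show "dep (tsubst u \<sigma>) < d"
    proof (cases "is_var u")
      case True
      then obtain z where z: "u = Var z" unfolding is_var_def by auto
      have "z \<in> tvars (Fun f us)" using u z by force
      then have "z \<in> tvars (Fun g us')" using assms(5) by blast
      from dep_var_lt[OF this assms(4)] z show ?thesis unfolding d_def by simp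
    next
      case False
      then obtain c where "u = Fun c []" using assms(2) u unfolding is_const_def by auto
      then show ?thesis using pos by simp
    qed
  qed
  have fin: "finite (set (map dep (map (\<lambda>t. tsubst t \<sigma>) us)))" by simp
  have ne: "set (map dep (map (\<lambda>t. tsubst t \<sigma>) us)) \<noteq> {}" using assms(1) by simp
  have "\<forall>a\<in>set (map dep (map (\<lambda>t. tsubst t \<sigma>) us)). a < d" using lt by simp
  then have "Max (set (map dep (map (\<lambda>t. tsubst t \<sigma>) us))) < d"
    using Max_less_iff[OF fin ne] by blast
  moreover have "dep (tsubst (Fun f us) \<sigma>) = 1 + Max (set (map dep (map (\<lambda>t. tsubst t \<sigma>) us)))"
    using assms(1) by simp
  ultimately have "dep (tsubst (Fun f us) \<sigma>) \<le> d" by linarith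
  then show ?thesis unfolding d_def .
qed

theorem mainTheorem10:
  fixes As :: "('p, 'f, 'v) atm list" and D :: "('p, 'f, 'v) atm list"
    and Bs :: "('p, 'f, 'v) atm list" and Ds :: "('p, 'f, 'v) clause list"
    and \<sigma> :: "('f, 'v) subst"
  defines "M \<equiv> map (Lit False) As @ map (Lit True) D"
  defines "Cs \<equiv> map (\<lambda>i. Lit True (Bs ! i) # Ds ! i) [0..<length As]"
  assumes lenB: "length Bs = length As" and lenD: "length Ds = length As"
    and flatM: "flat_clause M"
    and lg: "\<forall>i < length As. loosely_guarded (Cs ! i)"
    and disj: "\<forall>i < Suc (length As). \<forall>j < Suc (length As). i \<noteq> j \<longrightarrow>
                 cvars ((M # Cs) ! i) \<inter> cvars ((M # Cs) ! j) = {}"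
    and gc: "\<forall>i < length As. ground_clause (Cs ! i) \<or>
                 (\<exists>t \<in> atm_terms (Bs ! i). is_compound t)"
    and mgu: "simul_mgu \<sigma> Bs As"
  shows "(\<forall>i < length As. (\<exists>x \<in> avars (As ! i). top_var \<sigma> As x) \<longrightarrow>
            (\<forall>k < length (args (As ! i)). \<forall>x.
               args (As ! i) ! k = Var x \<longrightarrow>
               (top_var \<sigma> As x \<longrightarrow> is_const (args (Bs ! i) ! k) \<or> is_compound (args (Bs ! i) ! k)) \<and>
               (\<not> top_var \<sigma> As x \<longrightarrow> is_const (args (Bs ! i) ! k) \<or> is_var (args (Bs ! i) ! k))))
       \<and> ((\<exists>i < length As. \<exists>k < length (args (As ! i)). \<exists>x.
              args (As ! i) ! k = Var x \<and> top_var \<sigma> As x \<and> is_const (args (Bs ! i) ! k))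
          \<longrightarrow> (\<forall>y \<in> (\<Union>A \<in> set As. avars A). top_var \<sigma> As y \<and> is_const (\<sigma> y)))"
proof -
  define n where "n = length As"
  define V where "V = (\<Union>A \<in> set As. avars A)"
  have Csi: "\<And>i. i < n \<Longrightarrow> Cs ! i = Lit True (Bs ! i) # Ds ! i"
    unfolding Cs_def n_def by simp
  have ulen: "\<And>i. i < n \<Longrightarrow> length (args (Bs!i)) = length (args (As!i))"
  proof -
    fix i assume "i < n"
    then have "asubst (Bs!i) \<sigma> = asubst (As!i) \<sigma>"
      using mgu unfolding simul_mgu_def simul_unifier_def n_def by auto
    then have "args (asubst (Bs!i) \<sigma>) = args (asubst (As!i) \<sigma>)" by simp
    then show "length (args (Bs!i)) = length (args (As!i))"
      unfolding args_asubst by (metis length_map)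
  qed
  have unif: "\<And>i k. i < n \<Longrightarrow> k < length (args (As!i)) \<Longrightarrow>
      tsubst (args (Bs!i) ! k) \<sigma> = tsubst (args (As!i) ! k) \<sigma>"
  proof -
    fix i k assume i: "i < n" and k: "k < length (args (As!i))"
    then have "asubst (Bs!i) \<sigma> = asubst (As!i) \<sigma>"
      using mgu unfolding simul_mgu_def simul_unifier_def n_def by auto
    then have "args (asubst (Bs!i) \<sigma>) = args (asubst (As!i) \<sigma>)" by simp
    then have "map (\<lambda>t. tsubst t \<sigma>) (args (Bs!i)) ! k = map (\<lambda>t. tsubst t \<sigma>) (args (As!i)) ! k"
      unfolding args_asubst by simp
    then show "tsubst (args (Bs!i) ! k) \<sigma> = tsubst (args (As!i) ! k) \<sigma>"
      using k ulen[OF i] by simp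
  qed
  have flatA: "\<And>i k. i < n \<Longrightarrow> k < length (args (As!i)) \<Longrightarrow>
      is_var (args (As!i) ! k) \<or> is_const (args (As!i) ! k)"
  proof -
    fix i k assume i: "i < n" and k: "k < length (args (As!i))"
    have "Lit False (As!i) \<in> set M" using i unfolding M_def n_def by auto
    then have "flat_lit (Lit False (As!i))" using flatM unfolding flat_clause_def by blast
    then show "is_var (args (As!i) ! k) \<or> is_const (args (As!i) ! k)"
      using k unfolding flat_lit_def by auto
  qed
  have simpB: "\<And>i k. i < n \<Longrightarrow> k < length (args (Bs!i)) \<Longrightarrow>
      is_var (args (Bs!i) ! k) \<or> is_const (args (Bs!i) ! k) \<or>
      (\<exists>f us. args (Bs!i) ! k = Fun f us \<and> (\<forall>u\<in>set us. is_var u \<or> is_const u))"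
  proof -
    fix i k assume i: "i < n" and k: "k < length (args (Bs!i))"
    have "simple_clause (Cs!i)" using lg i unfolding loosely_guarded_def n_def by auto
    then have "simple_lit (Lit True (Bs!i))" using Csi[OF i] unfolding simple_clause_def by auto
    then show "is_var (args (Bs!i) ! k) \<or> is_const (args (Bs!i) ! k) \<or>
      (\<exists>f us. args (Bs!i) ! k = Fun f us \<and> (\<forall>u\<in>set us. is_var u \<or> is_const u))"
      using k unfolding simple_lit_def by auto
  qed
  have cov: "\<And>i k. i < n \<Longrightarrow> k < length (args (Bs!i)) \<Longrightarrow> is_compound (args (Bs!i) ! k) \<Longrightarrow>
      tvars (args (Bs!i) ! k) = cvars (Cs!i)"
  proof -
    fix i k assume i: "i < n" and k: "k < length (args (Bs!i))" and c: "is_compound (args (Bs!i) ! k)"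
    have "covering (Cs!i)" using lg i unfolding loosely_guarded_def n_def by auto
    moreover have "args (Bs!i) ! k \<in> cl_terms (Cs!i)"
    proof -
      have "args (Bs!i) ! k \<in> set (args (Bs!i))" using k by (rule nth_mem)
      then have "args (Bs!i) ! k \<in> atm_terms (atom (Lit True (Bs!i)))"
        unfolding atm_terms_def using self_subterm by auto
      then show ?thesis unfolding cl_terms_def using Csi[OF i] by auto
    qed
    ultimately show "tvars (args (Bs!i) ! k) = cvars (Cs!i)" using c unfolding covering_def by blast
  qed
  have bvars: "\<And>i k z. i < n \<Longrightarrow> k < length (args (Bs!i)) \<Longrightarrow> z \<in> tvars (args (Bs!i) ! k) \<Longrightarrow>
      z \<in> cvars (Cs!i)"
  proof -
    fix i k z assume i: "i < n" and k: "k < length (args (Bs!i))" and z: "z \<in> tvars (args (Bs!i) ! k)"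
    have "args (Bs!i) ! k \<in> set (args (Bs!i))" using k by (rule nth_mem)
    then have "z \<in> lvars (Lit True (Bs!i))" unfolding lvars_def avars_def using z by auto
    then show "z \<in> cvars (Cs!i)" unfolding cvars_def using Csi[OF i] by auto
  qed
  have gcB: "\<And>i. i < n \<Longrightarrow> cvars (Cs!i) = {} \<or> (\<exists>k<length (args (Bs!i)). is_compound (args (Bs!i) ! k))"
  proof -
    fix i assume i: "i < n"
    show "cvars (Cs!i) = {} \<or> (\<exists>k<length (args (Bs!i)). is_compound (args (Bs!i) ! k))"
    proof (cases "ground_clause (Cs!i)")
      case True then show ?thesis unfolding ground_clause_def by simp
    next
      case False
      then obtain t where t: "t \<in> atm_terms (Bs!i)" "is_compound t" using gc i n_def by auto
      then obtain s where s: "s \<in> set (args (Bs!i))" "t \<in> subterms s" unfolding atm_terms_def by auto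
      then obtain k where k: "k < length (args (Bs!i))" "s = args (Bs!i) ! k"
        by (auto simp: in_set_conv_nth)
      have "t = s" using compound_sub[OF simpB[OF i k(1)]] s t k by simp
      then show ?thesis using k t by auto
    qed
  qed
  have inV: "\<And>i k x. i < n \<Longrightarrow> k < length (args (As!i)) \<Longrightarrow> args (As!i) ! k = Var x \<Longrightarrow> x \<in> V"
  proof -
    fix i k x assume i: "i < n" and k: "k < length (args (As!i))" and e: "args (As!i) ! k = Var x"
    have "As!i \<in> set As" using i n_def by auto
    moreover have "x \<in> avars (As!i)"
    proof -
      have "args (As!i) ! k \<in> set (args (As!i))" using k by (rule nth_mem)
      then show ?thesis unfolding avars_def using e by force
    qed
    ultimately show "x \<in> V" unfolding V_def by blast
  qed
  have posA: "\<And>i x. i < n \<Longrightarrow> x \<in> avars (As!i) \<Longrightarrow> \<exists>k<length (args (As!i)). args (As!i) ! k = Var x"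
  proof -
    fix i x assume i: "i < n" and x: "x \<in> avars (As!i)"
    then obtain t where t: "t \<in> set (args (As!i))" "x \<in> tvars t" unfolding avars_def by auto
    then obtain k where k: "k < length (args (As!i))" "t = args (As!i) ! k"
      by (auto simp: in_set_conv_nth)
    have "t = Var x" using flatA[OF i k(1)] k t unfolding is_var_def is_const_def by auto
    then show "\<exists>k<length (args (As!i)). args (As!i) ! k = Var x" using k by auto
  qed
  have topdef: "\<And>x. top_var \<sigma> As x \<longleftrightarrow> x \<in> V \<and> (\<forall>y\<in>V. dep (\<sigma> y) \<le> dep (\<sigma> x))"
    unfolding top_var_def V_def by simp
  have compvar: "\<And>i k. i < n \<Longrightarrow> k < length (args (As!i)) \<Longrightarrow> is_compound (args (Bs!i) ! k) \<Longrightarrow>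
      \<exists>x. args (As!i) ! k = Var x"
  proof -
    fix i k assume i: "i < n" and k: "k < length (args (As!i))" and c: "is_compound (args (Bs!i) ! k)"
    show "\<exists>x. args (As!i) ! k = Var x"
    proof (cases "is_var (args (As!i) ! k)")
      case True then show ?thesis unfolding is_var_def by auto
    next
      case False
      then obtain cc where cc: "args (As!i) ! k = Fun cc []" using flatA[OF i k] unfolding is_const_def by auto
      obtain f us where fu: "args (Bs!i) ! k = Fun f us" "us \<noteq> []" using c unfolding compound_iff by blast
      have "tsubst (args (Bs!i) ! k) \<sigma> = tsubst (args (As!i) ! k) \<sigma>" using unif[OF i k] .
      then have False using cc fu by simp
      then show ?thesis ..
    qed
  qed
  have part1: "\<forall>i < length As. (\<exists>x \<in> avars (As ! i). top_var \<sigma> As x) \<longrightarrow>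
            (\<forall>k < length (args (As ! i)). \<forall>x.
               args (As ! i) ! k = Var x \<longrightarrow>
               (top_var \<sigma> As x \<longrightarrow> is_const (args (Bs ! i) ! k) \<or> is_compound (args (Bs ! i) ! k)) \<and>
               (\<not> top_var \<sigma> As x \<longrightarrow> is_const (args (Bs ! i) ! k) \<or> is_var (args (Bs ! i) ! k)))"
  proof (intro allI impI)
    fix i k x
    assume i': "i < length As" and ex: "\<exists>x \<in> avars (As ! i). top_var \<sigma> As x"
      and k: "k < length (args (As ! i))" and e: "args (As ! i) ! k = Var x"
    have i: "i < n" using i' n_def by simp
    have kB: "k < length (args (Bs!i))" using k ulen[OF i] by simp
    obtain x0 where x0: "x0 \<in> avars (As!i)" "top_var \<sigma> As x0" using ex by blast
    obtain k0 where k0: "k0 < length (args (As!i))" "args (As!i) ! k0 = Var x0" using posA[OF i x0(1)] by blast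
    have k0B: "k0 < length (args (Bs!i))" using k0 ulen[OF i] by simp
    have sx: "\<sigma> x = tsubst (args (Bs!i) ! k) \<sigma>" using unif[OF i k] e by simp
    have sx0: "\<sigma> x0 = tsubst (args (Bs!i) ! k0) \<sigma>" using unif[OF i k0(1)] k0(2) by simp
    have xV: "x \<in> V" using inV[OF i k e] .
    consider (v) "is_var (args (Bs!i) ! k)" | (c) "is_const (args (Bs!i) ! k)"
      | (f) f us where "args (Bs!i) ! k = Fun f us" "us \<noteq> []" "\<forall>u\<in>set us. is_var u \<or> is_const u"
      using simpB[OF i kB] unfolding is_const_def by blast
    then show "(top_var \<sigma> As x \<longrightarrow> is_const (args (Bs ! i) ! k) \<or> is_compound (args (Bs ! i) ! k)) \<and>
               (\<not> top_var \<sigma> As x \<longrightarrow> is_const (args (Bs ! i) ! k) \<or> is_var (args (Bs ! i) ! k))"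
    proof cases
      case c then show ?thesis by simp
    next
      case v
      then obtain z where z: "args (Bs!i) ! k = Var z" unfolding is_var_def by auto
      have zc: "z \<in> cvars (Cs!i)" using bvars[OF i kB] z by simp
      then obtain k' where k': "k' < length (args (Bs!i))" "is_compound (args (Bs!i) ! k')"
        using gcB[OF i] by blast
      have k'A: "k' < length (args (As!i))" using k' ulen[OF i] by simp
      obtain x'' where x'': "args (As!i) ! k' = Var x''" using compvar[OF i k'A k'(2)] by blast
      obtain f us where fu: "args (Bs!i) ! k' = Fun f us" "us \<noteq> []" using k'(2) unfolding compound_iff by blast
      have flat: "\<forall>u\<in>set us. is_var u \<or> is_const u"
        using simpB[OF i k'(1)] fu k'(2) unfolding is_var_def is_const_def by auto
      have "z \<in> tvars (Fun f us)" using cov[OF i k'] fu zc by simp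
      then have "dep (\<sigma> z) < dep (tsubst (Fun f us) \<sigma>)" by (rule dep_var_lt[OF _ flat])
      moreover have "\<sigma> x'' = tsubst (Fun f us) \<sigma>" using unif[OF i k'A] x'' fu by simp
      moreover have "\<sigma> x = \<sigma> z" using sx z by simp
      moreover have "x'' \<in> V" using inV[OF i k'A x''] .
      ultimately have lt: "dep (\<sigma> x) < dep (\<sigma> x'')" by simp
      have "\<not> top_var \<sigma> As x"
      proof
        assume "top_var \<sigma> As x"
        then have "dep (\<sigma> x'') \<le> dep (\<sigma> x)" using \<open>x'' \<in> V\<close> unfolding topdef by blast
        then show False using lt by simp
      qed
      then show ?thesis using v by simp
    next
      case f
      have comp: "is_compound (args (Bs!i) ! k)" unfolding compound_iff using f by blast
      have "dep (\<sigma> x0) \<le> dep (\<sigma> x)"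
      proof -
        consider (v0) "is_var (args (Bs!i) ! k0)" | (c0) "is_const (args (Bs!i) ! k0)"
          | (f0) g vs where "args (Bs!i) ! k0 = Fun g vs" "vs \<noteq> []" "\<forall>u\<in>set vs. is_var u \<or> is_const u"
          using simpB[OF i k0B] unfolding is_const_def by blast
        then show ?thesis
        proof cases
          case c0 then show ?thesis using sx0 unfolding is_const_def by auto
        next
          case v0
          then obtain z where z: "args (Bs!i) ! k0 = Var z" unfolding is_var_def by auto
          have "z \<in> cvars (Cs!i)" using bvars[OF i k0B] z by simp
          then have "z \<in> tvars (Fun f us)" using cov[OF i kB comp] f by simp
          then have "dep (\<sigma> z) < dep (tsubst (Fun f us) \<sigma>)" by (rule dep_var_lt[OF _ f(3)])
          then show ?thesis using sx sx0 z f by simp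
        next
          case f0
          have comp0: "is_compound (args (Bs!i) ! k0)" unfolding compound_iff using f0 by blast
          have "tvars (Fun g vs) \<subseteq> tvars (Fun f us)"
            using cov[OF i kB comp] cov[OF i k0B comp0] f f0 by simp
          then have "dep (tsubst (Fun g vs) \<sigma>) \<le> dep (tsubst (Fun f us) \<sigma>)"
            by (rule dep_compound_le[OF f0(2,3) f(2,3)])
          then show ?thesis using sx sx0 f f0 by simp
        qed
      qed
      then have "top_var \<sigma> As x" using x0(2) xV unfolding topdef using order_trans by blast
      then show ?thesis using comp by simp
    qed
  qed
  have part2: "(\<exists>i < length As. \<exists>k < length (args (As ! i)). \<exists>x.
              args (As ! i) ! k = Var x \<and> top_var \<sigma> As x \<and> is_const (args (Bs ! i) ! k))
          \<longrightarrow> (\<forall>y \<in> (\<Union>A \<in> set As. avars A). top_var \<sigma> As y \<and> is_const (\<sigma> y))"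
  proof (intro impI)
    assume "\<exists>i < length As. \<exists>k < length (args (As ! i)). \<exists>x.
              args (As ! i) ! k = Var x \<and> top_var \<sigma> As x \<and> is_const (args (Bs ! i) ! k)"
    then obtain i k x where i: "i < n" and k: "k < length (args (As ! i))"
      and e: "args (As ! i) ! k = Var x" and t: "top_var \<sigma> As x" and c: "is_const (args (Bs ! i) ! k)"
      unfolding n_def by blast
    have "\<sigma> x = tsubst (args (Bs!i) ! k) \<sigma>" using unif[OF i k] e by simp
    then have "dep (\<sigma> x) = 0" using c unfolding is_const_def by auto
    then have all0: "\<forall>y\<in>V. dep (\<sigma> y) = 0" using t unfolding topdef by auto
    show "\<forall>y \<in> (\<Union>A \<in> set As. avars A). top_var \<sigma> As y \<and> is_const (\<sigma> y)"
    proof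
      fix y assume "y \<in> (\<Union>A \<in> set As. avars A)"
      then have yV: "y \<in> V" unfolding V_def .
      have ty: "top_var \<sigma> As y" using yV all0 unfolding topdef by auto
      from yV obtain j where j: "j < n" "y \<in> avars (As!j)"
        unfolding V_def n_def by (auto simp: in_set_conv_nth)
      obtain k' where k': "k' < length (args (As!j))" "args (As!j) ! k' = Var y" using posA[OF j] by blast
      have k'B: "k' < length (args (Bs!j))" using k' ulen[OF j(1)] by simp
      have nocomp: "\<forall>k''<length (args (Bs!j)). \<not> is_compound (args (Bs!j) ! k'')"
      proof (intro allI impI notI)
        fix k'' assume k'': "k'' < length (args (Bs!j))" and cc: "is_compound (args (Bs!j) ! k'')"
        have k''A: "k'' < length (args (As!j))" using k'' ulen[OF j(1)] by simp
        obtain w where w: "args (As!j) ! k'' = Var w" using compvar[OF j(1) k''A cc] by blast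
        obtain f us where fu: "args (Bs!j) ! k'' = Fun f us" "us \<noteq> []" using cc unfolding compound_iff by blast
        have "\<sigma> w = tsubst (Fun f us) \<sigma>" using unif[OF j(1) k''A] w fu by simp
        then have "dep (\<sigma> w) > 0" using fu by simp
        moreover have "w \<in> V" using inV[OF j(1) k''A w] .
        ultimately show False using all0 by auto
      qed
      then have gr: "cvars (Cs!j) = {}" using gcB[OF j(1)] by blast
      have sy: "\<sigma> y = tsubst (args (Bs!j) ! k') \<sigma>" using unif[OF j(1) k'(1)] k'(2) by simp
      consider (v) "is_var (args (Bs!j) ! k')" | (c) "is_const (args (Bs!j) ! k')"
        | (f) f us where "args (Bs!j) ! k' = Fun f us" "us \<noteq> []"
        using simpB[OF j(1) k'B] unfolding is_const_def by blast
      then have "is_const (\<sigma> y)"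
      proof cases
        case v
        then obtain z where z: "args (Bs!j) ! k' = Var z" unfolding is_var_def by auto
        have "z \<in> cvars (Cs!j)" using bvars[OF j(1) k'B] z by simp
        then show ?thesis using gr by simp
      next
        case c then show ?thesis using sy unfolding is_const_def by auto
      next
        case f
        then have "is_compound (args (Bs!j) ! k')" unfolding compound_iff by blast
        then show ?thesis using nocomp k'B by blast
      qed
      then show "top_var \<sigma> As y \<and> is_const (\<sigma> y)" using ty by simp
    qed
  qed
  show ?thesis using part1 part2 by blast
qed

end
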